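(* Let $n\ge 3$ and let $PC_n$ be any polyomino chain with $n$ squares. Then $$ZC_1(Li_n)\le ZC_1(PC_n)\le ZC_1(Z_n),$$ with equality on the left if and only if $PC_n=Li_n$ and equality on the right if and only if $PC_n=Z_n$. Moreover, $ZC_1(Li_n)=32n-44$ for $n\ge 3$ and $ZC_1(Z_n)=50n-92$ for $n\ge 4$.
   Context: A polyomino chain $PC_n$ with $n$ squares is a sequence of unit squares $S_1,\dots,S_n$ in the plane in which consecutive squares share exactly one edge and the centers of consecutive squares form a path; it is regarded as the graph whose vertices are the corners of the squares and whose edges are the sides of the squares. For $3\le k\le n$, the link $L_k\in\{1,2\}$ is $1$ if $S_{k-2},S_{k-1},S_k$ lie on a straight line and $2$ otherwise (the chain turns at $S_{k-1}$). The linear chain $Li_n$ is the chain with all $L_k=1$ ($n$ squares in a row); the zigzag chain $Z_n$ is the staircase chain with all $L_k=2$ (all segments, i.e. maximal straight subchains, of length 2). For a vertex $v$, $\tau_v$ is the number of vertices at distance exactly $2$ from $v$, and $ZC_1(G)=\sum_{v\in V(G)}\tau_v^2$. *)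

theory Defs
  imports Main
begin

text \<open>A square is identified with its lower-left corner (an integer lattice point).
  A polyomino chain with n squares is a list of n squares S_1..S_n (list index 0..n-1).\<close>

type_synonym square = "int \<times> int"

definition corners :: "square \<Rightarrow> (int \<times> int) set" where
  "corners s = {(fst s, snd s), (fst s + 1, snd s), (fst s, snd s + 1), (fst s + 1, snd s + 1)}"

text \<open>Polyomino chain: consecutive squares share exactly one edge (their lower-left corners
  are at lattice distance 1); the squares are distinct; non-consecutive squares share no edge,
  and squares that are at least 3 apart in the chain are disjoint (no common corner), so that
  the adjacency graph of squares is a path and the region has no holes.\<close>
definition is_polyomino_chain :: "square list \<Rightarrow> bool" where
  "is_polyomino_chain S \<longleftrightarrow>
     (\<forall>i. Suc i < length S \<longrightarrow>
        \<bar>fst (S!i) - fst (S!Suc i)\<bar> + \<bar>snd (S!i) - snd (S!Suc i)\<bar> = 1) \<and>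
     (\<forall>i j. i + 2 = j \<and> j < length S \<longrightarrow> S!i \<noteq> S!j) \<and>
     (\<forall>i j. i + 3 \<le> j \<and> j < length S \<longrightarrow>
        max \<bar>fst (S!i) - fst (S!j)\<bar> \<bar>snd (S!i) - snd (S!j)\<bar> \<ge> 2)"

text \<open>Link L_k for the squares with list indices k-2, k-1, k (2 \<le> k < length S):
  1 if they lie on a straight line, 2 otherwise.\<close>
definition link :: "square list \<Rightarrow> nat \<Rightarrow> nat" where
  "link S k = (if fst (S!k) - fst (S!(k-1)) = fst (S!(k-1)) - fst (S!(k-2)) \<and>
                  snd (S!k) - snd (S!(k-1)) = snd (S!(k-1)) - snd (S!(k-2)) then 1 else 2)"

definition chain_vertices :: "square list \<Rightarrow> (int \<times> int) set" where
  "chain_vertices S = (\<Union>s\<in>set S. corners s)"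

definition chain_adj :: "square list \<Rightarrow> int \<times> int \<Rightarrow> int \<times> int \<Rightarrow> bool" where
  "chain_adj S p q \<longleftrightarrow> (\<exists>s\<in>set S. p \<in> corners s \<and> q \<in> corners s \<and>
      \<bar>fst p - fst q\<bar> + \<bar>snd p - snd q\<bar> = 1)"

definition tau :: "square list \<Rightarrow> int \<times> int \<Rightarrow> nat" where
  "tau S v = card {u \<in> chain_vertices S. u \<noteq> v \<and> \<not> chain_adj S v u \<and>
                     (\<exists>w \<in> chain_vertices S. chain_adj S v w \<and> chain_adj S w u)}"

definition ZC1 :: "square list \<Rightarrow> nat" where
  "ZC1 S = (\<Sum>v\<in>chain_vertices S. (tau S v)^2)"

definition Li :: "nat \<Rightarrow> square list" where
  "Li n = map (\<lambda>i. (int i, 0)) [0..<n]"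

definition Zz :: "nat \<Rightarrow> square list" where
  "Zz n = map (\<lambda>i. (int ((i + 1) div 2), int (i div 2))) [0..<n]"

end

theory Submission
  imports Defs
begin


definition edgeX :: "square set \<Rightarrow> int \<times> int \<Rightarrow> int \<times> int \<Rightarrow> bool" where
  "edgeX X p q \<longleftrightarrow> (\<exists>s\<in>X. p \<in> corners s \<and> q \<in> corners s \<and>
      \<bar>fst p - fst q\<bar> + \<bar>snd p - snd q\<bar> = 1)"

definition vertsX :: "square set \<Rightarrow> (int \<times> int) set" where
  "vertsX X = (\<Union>s\<in>X. corners s)"

definition W2 :: "square set \<Rightarrow> int \<times> int \<Rightarrow> (int \<times> int) set" where
  "W2 X v = {u. u \<noteq> v \<and> (\<exists>w. edgeX X v w \<and> edgeX X w u)}"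

definition tauX :: "square set \<Rightarrow> int \<times> int \<Rightarrow> nat" where
  "tauX X v = card (W2 X v)"

lemma corners_iff: "p \<in> corners s \<longleftrightarrow> (fst p = fst s \<or> fst p = fst s + 1) \<and> (snd p = snd s \<or> snd p = snd s + 1)"
  by (cases p; cases s) (auto simp: corners_def)

lemma edge_dist: "edgeX X p q \<Longrightarrow> \<bar>fst p - fst q\<bar> + \<bar>snd p - snd q\<bar> = 1"
  by (auto simp: edgeX_def)

lemma edge_verts: "edgeX X p q \<Longrightarrow> p \<in> vertsX X \<and> q \<in> vertsX X"
  by (auto simp: edgeX_def vertsX_def)

lemma parity: "\<bar>a\<bar> + \<bar>b\<bar> = (1::int) \<Longrightarrow> \<bar>c\<bar> + \<bar>d\<bar> = 1 \<Longrightarrow> \<bar>a + c\<bar> + \<bar>b + d\<bar> \<noteq> 1"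
  by arith

lemma chain_adj_eq: "chain_adj S = edgeX (set S)"
  by (auto simp: fun_eq_iff chain_adj_def edgeX_def)

lemma tau_eq: "tau S v = tauX (set S) v"
proof -
  have "{u \<in> chain_vertices S. u \<noteq> v \<and> \<not> chain_adj S v u \<and>
                     (\<exists>w \<in> chain_vertices S. chain_adj S v w \<and> chain_adj S w u)} = W2 (set S) v"
  proof (intro set_eqI iffI)
    fix u assume "u \<in> W2 (set S) v"
    then obtain w where u: "u \<noteq> v" "edgeX (set S) v w" "edgeX (set S) w u" by (auto simp: W2_def)
    have "\<not> edgeX (set S) v u"
    proof
      assume "edgeX (set S) v u"
      from edge_dist[OF this] edge_dist[OF u(2)] edge_dist[OF u(3)]
      show False using parity[of "fst v - fst w" "snd v - snd w" "fst w - fst u" "snd w - snd u"] by simp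
    qed
    then show "u \<in> {u \<in> chain_vertices S. u \<noteq> v \<and> \<not> chain_adj S v u \<and>
                     (\<exists>w \<in> chain_vertices S. chain_adj S v w \<and> chain_adj S w u)}"
      using u edge_verts[OF u(2)] edge_verts[OF u(3)]
      by (auto simp: chain_adj_eq chain_vertices_def vertsX_def)
  qed (auto simp: W2_def chain_adj_eq)
  then show ?thesis by (simp add: tau_def tauX_def)
qed

lemma ZC1_eq: "ZC1 S = (\<Sum>v\<in>vertsX (set S). (tauX (set S) v)^2)"
  by (simp add: ZC1_def tau_eq chain_vertices_def vertsX_def)

definition hX :: "square set \<Rightarrow> int \<Rightarrow> int \<Rightarrow> bool" where
 "hX X x y \<longleftrightarrow> (x,y) \<in> X \<or> (x,y-1) \<in> X"
definition vX :: "square set \<Rightarrow> int \<Rightarrow> int \<Rightarrow> bool" where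
 "vX X x y \<longleftrightarrow> (x,y) \<in> X \<or> (x-1,y) \<in> X"

lemma edge_sym: "edgeX X p q \<Longrightarrow> edgeX X q p"
  unfolding edgeX_def by (auto simp: abs_minus_commute)

lemma eh1: "(x,y) \<in> X \<Longrightarrow> edgeX X (x,y) (x+1,y)"
  unfolding edgeX_def by (rule bexI[of _ "(x,y)"]) (auto simp: corners_def)
lemma eh2: "(x,y-1) \<in> X \<Longrightarrow> edgeX X (x,y) (x+1,y)"
  unfolding edgeX_def by (rule bexI[of _ "(x,y-1)"]) (auto simp: corners_def)
lemma ev1: "(x,y) \<in> X \<Longrightarrow> edgeX X (x,y) (x,y+1)"
  unfolding edgeX_def by (rule bexI[of _ "(x,y)"]) (auto simp: corners_def)
lemma ev2: "(x-1,y) \<in> X \<Longrightarrow> edgeX X (x,y) (x,y+1)"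
  unfolding edgeX_def by (rule bexI[of _ "(x-1,y)"]) (auto simp: corners_def)

lemma edge_char: "edgeX X p q \<longleftrightarrow>
   (q = (fst p + 1, snd p) \<and> hX X (fst p) (snd p)) \<or> (p = (fst q + 1, snd q) \<and> hX X (fst q) (snd q)) \<or>
   (q = (fst p, snd p + 1) \<and> vX X (fst p) (snd p)) \<or> (p = (fst q, snd q + 1) \<and> vX X (fst q) (snd q))"
proof
  assume "edgeX X p q"
  then obtain s where s: "s \<in> X" "p \<in> corners s" "q \<in> corners s" "\<bar>fst p - fst q\<bar> + \<bar>snd p - snd q\<bar> = 1"
    by (auto simp: edgeX_def)
  obtain a b where sab: "s = (a,b)" by (cases s)
  obtain x y where pxy: "p = (x,y)" by (cases p)
  obtain x' y' where qxy: "q = (x',y')" by (cases q)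
  show "(q = (fst p + 1, snd p) \<and> hX X (fst p) (snd p)) \<or> (p = (fst q + 1, snd q) \<and> hX X (fst q) (snd q)) \<or>
   (q = (fst p, snd p + 1) \<and> vX X (fst p) (snd p)) \<or> (p = (fst q, snd q + 1) \<and> vX X (fst q) (snd q))"
    using s unfolding sab pxy qxy corners_iff hX_def vX_def by (auto split: if_splits)
next
  assume h: "(q = (fst p + 1, snd p) \<and> hX X (fst p) (snd p)) \<or> (p = (fst q + 1, snd q) \<and> hX X (fst q) (snd q)) \<or>
   (q = (fst p, snd p + 1) \<and> vX X (fst p) (snd p)) \<or> (p = (fst q, snd q + 1) \<and> vX X (fst q) (snd q))"
  obtain x y where pxy: "p = (x,y)" by (cases p)
  obtain x' y' where qxy: "q = (x',y')" by (cases q)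
  show "edgeX X p q" using h unfolding pxy qxy hX_def vX_def
    by (elim disjE conjE; (elim disjE)?; simp; metis eh1 eh2 ev1 ev2 edge_sym)
qed


lemma edge_from: "edgeX X (x,y) w \<longleftrightarrow> (w=(x+1,y) \<and> hX X x y) \<or> (w=(x-1,y) \<and> hX X (x-1) y) \<or>
   (w=(x,y+1) \<and> vX X x y) \<or> (w=(x,y-1) \<and> vX X x (y-1))"
  by (cases w) (auto simp: edge_char)
definition candX :: "square set \<Rightarrow> int \<times> int \<Rightarrow> ((int\<times>int)\<times>bool) list" where
 "candX X v = (case v of (x,y) \<Rightarrow>
   [((x+2,y), hX X x y \<and> hX X (x+1) y),
    ((x-2,y), hX X (x-1) y \<and> hX X (x-2) y),
    ((x,y+2), vX X x y \<and> vX X x (y+1)),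
    ((x,y-2), vX X x (y-1) \<and> vX X x (y-2)),
    ((x+1,y+1), hX X x y \<and> vX X (x+1) y \<or> vX X x y \<and> hX X x (y+1)),
    ((x+1,y-1), hX X x y \<and> vX X (x+1) (y-1) \<or> vX X x (y-1) \<and> hX X x (y-1)),
    ((x-1,y+1), hX X (x-1) y \<and> vX X (x-1) y \<or> vX X x y \<and> hX X (x-1) (y+1)),
    ((x-1,y-1), hX X (x-1) y \<and> vX X (x-1) (y-1) \<or> vX X x (y-1) \<and> hX X (x-1) (y-1))])"

lemma W2_range: "(x+da,y+db) \<in> W2 X (x,y) \<Longrightarrow> da \<in> {-2,-1,0,1,2} \<and> db \<in> {-2,-1,0,1,2}"
proof -
  assume "(x+da,y+db) \<in> W2 X (x,y)"
  then obtain w where "edgeX X (x,y) w" "edgeX X w (x+da,y+db)" by (auto simp: W2_def)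
  from edge_dist[OF this(1)] edge_dist[OF this(2)]
  have "-2 \<le> da \<and> da \<le> 2 \<and> -2 \<le> db \<and> db \<le> 2" by simp arith
  then show ?thesis by auto
qed

lemma mem_mf: "u \<in> set (map fst (filter snd xs)) \<longleftrightarrow> (\<exists>p\<in>set xs. fst p = u \<and> snd p)"
  by auto

lemma cand_range: "(x+da,y+db) \<in> set (map fst (filter snd (candX X (x,y)))) \<Longrightarrow> da \<in> {-2,-1,0,1,2} \<and> db \<in> {-2,-1,0,1,2}"
  unfolding candX_def mem_mf by (simp only: list.set insert_iff empty_iff bex_simps fst_conv snd_conv case_prod_conv; elim disjE; simp)

lemma W2_cand: "W2 X (x,y) = set (map fst (filter snd (candX X (x,y))))"
proof (intro set_eqI)
  fix u :: "int \<times> int"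
  obtain da db where u: "u = (x+da,y+db)"
  proof
    show "u = (x + (fst u - x), y + (snd u - y))" by simp
  qed
  show "u \<in> W2 X (x,y) \<longleftrightarrow> u \<in> set (map fst (filter snd (candX X (x,y))))"
  proof (cases "da \<in> {-2,-1,0,1,2} \<and> db \<in> {-2,-1,0,1,2}")
    case True
    then show ?thesis unfolding u W2_def candX_def
      apply (simp only: insert_iff empty_iff simp_thms mem_mf list.set bex_simps fst_conv snd_conv case_prod_conv)
      apply (elim conjE disjE)
      apply (simp_all add: edge_from ex_disj_distrib conj_disj_distribR)
      done
  next
    case False
    then show ?thesis unfolding u using W2_range cand_range by blast
  qed
qed
lemma distinct_cand: "distinct (map fst (candX X v))"
  by (cases v) (simp add: candX_def)

lemma tauX_cand: "tauX X v = length (filter snd (candX X v))"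
proof -
  obtain x y where v: "v = (x,y)" by (cases v)
  have "distinct (map fst (filter snd (candX X v)))"
    using distinct_cand[of X v] by (simp add: distinct_map_filter)
  then have "card (set (map fst (filter snd (candX X v)))) = length (filter snd (candX X v))"
    using distinct_card by fastforce
  then show ?thesis unfolding tauX_def v W2_cand by simp
qed


lemma corners_close: "p \<in> corners s \<Longrightarrow> p \<in> corners t \<Longrightarrow> \<bar>fst s - fst t\<bar> \<le> 1 \<and> \<bar>snd s - snd t\<bar> \<le> 1"
  unfolding corners_iff by (cases p, cases s, cases t) (auto simp: abs_le_iff)

lemma share:
  assumes "is_polyomino_chain S" "i < length S" "j < length S" "p \<in> corners (S!i)" "p \<in> corners (S!j)"
  shows "j \<le> i + 2"
proof (rule ccontr)
  assume "\<not> j \<le> i + 2"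
  then have "i + 3 \<le> j" by simp
  with assms(1,3) have "max \<bar>fst (S!i) - fst (S!j)\<bar> \<bar>snd (S!i) - snd (S!j)\<bar> \<ge> 2"
    unfolding is_polyomino_chain_def by blast
  moreover from assms(4,5) have "\<bar>fst (S!i) - fst (S!j)\<bar> \<le> 1" "\<bar>snd (S!i) - snd (S!j)\<bar> \<le> 1"
    using corners_close by blast+
  ultimately show False by simp
qed

lemma in_drop: "a \<le> k \<Longrightarrow> k < length xs \<Longrightarrow> xs!k \<in> set (drop a xs)"
proof -
  assume a: "a \<le> k" "k < length xs"
  then have "drop a xs ! (k - a) = xs ! k" by simp
  moreover have "k - a < length (drop a xs)" using a by simp
  ultimately show ?thesis by (metis nth_mem)
qed

lemma edge_mono: "Y \<subseteq> X \<Longrightarrow> edgeX Y p q \<Longrightarrow> edgeX X p q"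
  unfolding edgeX_def by blast

lemma window:
  assumes "Y \<subseteq> X"
    and "\<And>s t w. s \<in> X \<Longrightarrow> t \<in> X \<Longrightarrow> v \<in> corners s \<Longrightarrow> w \<in> corners s \<Longrightarrow> w \<in> corners t \<Longrightarrow> s \<in> Y \<and> t \<in> Y"
  shows "W2 X v = W2 Y v"
proof
  show "W2 Y v \<subseteq> W2 X v" using edge_mono[OF assms(1)] unfolding W2_def by blast
next
  show "W2 X v \<subseteq> W2 Y v"
  proof
    fix u assume "u \<in> W2 X v"
    then obtain w where u: "u \<noteq> v" "edgeX X v w" "edgeX X w u" by (auto simp: W2_def)
    from u(2) obtain s where s: "s \<in> X" "v \<in> corners s" "w \<in> corners s" "\<bar>fst v - fst w\<bar> + \<bar>snd v - snd w\<bar> = 1"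
      by (auto simp: edgeX_def)
    from u(3) obtain t where t: "t \<in> X" "w \<in> corners t" "u \<in> corners t" "\<bar>fst w - fst u\<bar> + \<bar>snd w - snd u\<bar> = 1"
      by (auto simp: edgeX_def)
    from assms(2)[OF s(1) t(1) s(2) s(3) t(2)] have "s \<in> Y" "t \<in> Y" by auto
    then have "edgeX Y v w" "edgeX Y w u" using s t by (auto simp: edgeX_def)
    then show "u \<in> W2 Y v" using u(1) unfolding W2_def by blast
  qed
qed

lemma tau_out: "v \<notin> vertsX X \<Longrightarrow> tauX X v = 0"
proof -
  assume "v \<notin> vertsX X"
  then have "W2 X v = {}" using edge_verts unfolding W2_def by blast
  then show ?thesis by (simp add: tauX_def)
qed

lemma finite_corners: "finite (corners s)" by (simp add: corners_def)

lemma finite_verts: "finite X \<Longrightarrow> finite (vertsX X)"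
  by (simp add: vertsX_def finite_corners)

definition Dset :: "square list \<Rightarrow> (int \<times> int) set" where
  "Dset L = (\<Union>s\<in>set (drop (length L - 3) L). corners s)"

definition LD :: "square list \<Rightarrow> int" where
  "LD L = (\<Sum>v\<in>Dset L. int (tauX (set L) v)^2 - int (tauX (set (butlast L)) v)^2)"

lemma step:
  assumes ch: "is_polyomino_chain (S @ [q])" and len: "length S = m" and m: "m \<ge> 2"
  shows "int (ZC1 (S @ [q])) = int (ZC1 S) + LD (drop (m - 6) (S @ [q]))"
proof -
  define S' where "S' = S @ [q]"
  define X' where "X' = set S'"
  define X where "X = set S"
  define L where "L = drop (m - 6) S'"
  have lenS': "length S' = Suc m" using len by (simp add: S'_def)
  have nthS: "i < m \<Longrightarrow> S'!i = S!i" for i using len by (simp add: S'_def nth_append)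
  have nthq: "S'!m = q" using len by (simp add: S'_def nth_append)
  have chS': "is_polyomino_chain S'" using ch by (simp add: S'_def)
  define D where "D = (\<Union>j\<in>{m-2..m}. corners (S'!j))"
  have DL: "Dset L = D"
  proof -
    have "drop (length L - 3) L = drop (m-2) S'"
      using m lenS' by (simp add: L_def add.commute)
    moreover have "set (drop (m-2) S') = (\<lambda>j. S'!j) ` {m-2..m}"
    proof
      show "set (drop (m-2) S') \<subseteq> (\<lambda>j. S'!j) ` {m-2..m}"
        using lenS' by (auto simp: in_set_conv_nth) (metis atLeastAtMost_iff image_eqI le_add1 less_Suc_eq_le add.commute less_diff_conv)
      show "(\<lambda>j. S'!j) ` {m-2..m} \<subseteq> set (drop (m-2) S')"
        using lenS' by (auto intro!: in_drop)
    qed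
    ultimately show ?thesis by (simp add: Dset_def D_def)
  qed
  have butL: "butlast L = drop (m-6) S" using len by (simp add: L_def S'_def)
  have X'eq: "X' = insert q X" by (simp add: X'_def X_def S'_def)
  have memX': "s \<in> X' \<Longrightarrow> \<exists>i<Suc m. s = S'!i" for s
    using lenS' by (auto simp: X'_def in_set_conv_nth)
  have memX: "s \<in> X \<Longrightarrow> \<exists>i<m. s = S'!i" for s
    using len nthS by (auto simp: X_def in_set_conv_nth)
  have inX: "i < m \<Longrightarrow> S'!i \<in> X" for i using nthS len by (simp add: X_def)
  have sh: "i < Suc m \<Longrightarrow> j < Suc m \<Longrightarrow> p \<in> corners (S'!i) \<Longrightarrow> p \<in> corners (S'!j) \<Longrightarrow> j \<le> i + 2" for i j p
    using share[OF chS'] lenS' by auto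
  have inD: "j \<in> {m-2..m} \<Longrightarrow> v \<in> corners (S'!j) \<Longrightarrow> v \<in> D" for j v by (auto simp: D_def)
  have outside: "W2 X' v = W2 X v" if vD: "v \<notin> D" for v
  proof (rule window)
    show "X \<subseteq> X'" using X'eq by auto
    fix s t w assume st: "s \<in> X'" "t \<in> X'" "v \<in> corners s" "w \<in> corners s" "w \<in> corners t"
    from memX'[OF st(1)] obtain i where i: "i < Suc m" "s = S'!i" by auto
    from memX'[OF st(2)] obtain k where k: "k < Suc m" "t = S'!k" by auto
    have "i \<noteq> m" using inD[of m v] st(3) i vD by auto
    then have im: "i < m" using i by simp
    have "k \<noteq> m"
    proof
      assume "k = m"
      then have "m \<le> i + 2" using sh[of i k w] i k st by auto
      then have "m - 2 \<le> i" by simp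
      then show False using inD[of i v] st(3) i im vD by auto
    qed
    then show "s \<in> X \<and> t \<in> X" using im k i inX by auto
  qed
  have near: "i < Suc m \<Longrightarrow> k < Suc m \<Longrightarrow> v \<in> D \<Longrightarrow> v \<in> corners (S'!i) \<Longrightarrow> w \<in> corners (S'!i) \<Longrightarrow> w \<in> corners (S'!k)
     \<Longrightarrow> m - 6 \<le> i \<and> m - 6 \<le> k" for i k v w
  proof -
    assume st: "i < Suc m" "k < Suc m" "v \<in> D" "v \<in> corners (S'!i)" "w \<in> corners (S'!i)" "w \<in> corners (S'!k)"
    from st(3) obtain j where j: "j \<in> {m-2..m}" "v \<in> corners (S'!j)" by (auto simp: D_def)
    have "j \<le> i + 2" using sh[of i j v] st j by auto
    moreover have "i \<le> k + 2" using sh[of k i w] st by auto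
    ultimately show ?thesis using j by auto
  qed
  have inL: "S'!i \<in> set L" if "m - 6 \<le> i" "i < Suc m" for i
    using in_drop[of "m-6" i S'] that lenS' by (simp add: L_def)
  have inbL: "S'!i \<in> set (butlast L)" if "m - 6 \<le> i" "i < m" for i
    using in_drop[of "m-6" i S] that len nthS by (simp add: butL)
  have insideX': "W2 X' v = W2 (set L) v" if vD: "v \<in> D" for v
  proof (rule window)
    show "set L \<subseteq> X'" by (simp add: L_def X'_def set_drop_subset)
    fix s t w assume st: "s \<in> X'" "t \<in> X'" "v \<in> corners s" "w \<in> corners s" "w \<in> corners t"
    from memX'[OF st(1)] obtain i where i: "i < Suc m" "s = S'!i" by auto
    from memX'[OF st(2)] obtain k where k: "k < Suc m" "t = S'!k" by auto
    from near[OF i(1) k(1) vD] st i k show "s \<in> set L \<and> t \<in> set L" using inL by auto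
  qed
  have insideX: "W2 X v = W2 (set (butlast L)) v" if vD: "v \<in> D" for v
  proof (rule window)
    show "set (butlast L) \<subseteq> X" by (simp add: butL X_def set_drop_subset)
    fix s t w assume st: "s \<in> X" "t \<in> X" "v \<in> corners s" "w \<in> corners s" "w \<in> corners t"
    from memX[OF st(1)] obtain i where i: "i < m" "s = S'!i" by auto
    from memX[OF st(2)] obtain k where k: "k < m" "t = S'!k" by auto
    from near[of i k v w] st i k vD show "s \<in> set (butlast L) \<and> t \<in> set (butlast L)"
      using inbL by auto
  qed
  have finX': "finite (vertsX X')" by (simp add: X'_def finite_verts)
  have finX: "finite (vertsX X)" by (simp add: X_def finite_verts)
  have finD: "finite D" by (simp add: D_def finite_corners)
  have DV': "D \<subseteq> vertsX X'"
  proof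
    fix v assume "v \<in> D"
    then obtain j where j: "j \<in> {m-2..m}" "v \<in> corners (S'!j)" by (auto simp: D_def)
    then have "S'!j \<in> X'" using lenS' by (simp add: X'_def)
    then show "v \<in> vertsX X'" using j by (auto simp: vertsX_def)
  qed
  have qD: "corners q \<subseteq> D" using inD[of m] nthq m by auto
  have VV: "vertsX X' - D = vertsX X - D" using qD by (auto simp: vertsX_def X'eq)
  define f where "f v = (tauX X' v)^2" for v
  define g where "g v = (tauX X v)^2" for v
  have Z': "ZC1 S' = sum f (vertsX X' - D) + sum f D"
    unfolding ZC1_eq f_def X'_def[symmetric] using sum.subset_diff[OF DV' finX'] by simp
  have "ZC1 S = sum g (vertsX X)" unfolding ZC1_eq g_def X_def by simp
  also have "\<dots> = sum g (vertsX X \<union> D)"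
    by (rule sum.mono_neutral_left) (auto simp: finX finD g_def tau_out)
  also have "\<dots> = sum g (vertsX X - D) + sum g D"
    using sum.subset_diff[of D "vertsX X \<union> D" g] finX finD by (simp add: Un_Diff)
  finally have Z: "ZC1 S = sum g (vertsX X - D) + sum g D" .
  have "sum f (vertsX X' - D) = sum g (vertsX X - D)"
    unfolding VV by (rule sum.cong) (auto simp: f_def g_def tauX_def outside)
  then have "int (ZC1 S') = int (ZC1 S) + (\<Sum>v\<in>D. int (f v) - int (g v))"
    using Z Z' by (simp add: sum_subtractf of_nat_sum)
  also have "(\<Sum>v\<in>D. int (f v) - int (g v)) = LD L"
    unfolding LD_def DL by (rule sum.cong) (auto simp: f_def g_def tauX_def insideX' insideX)
  finally show ?thesis by (simp add: S'_def L_def)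
qed



lemma iso_edge:
  assumes inj: "inj g" and dist: "\<And>p q. \<bar>fst (g p) - fst (g q)\<bar> + \<bar>snd (g p) - snd (g q)\<bar> = \<bar>fst p - fst q\<bar> + \<bar>snd p - snd q\<bar>"
    and cor: "\<And>s. corners (gc s) = g ` corners s"
  shows "edgeX (gc ` X) (g p) (g q) \<longleftrightarrow> edgeX X p q"
proof -
  have "g p \<in> g ` A \<longleftrightarrow> p \<in> A" for p A using inj by (auto dest: injD)
  then show ?thesis unfolding edgeX_def using cor dist by auto
qed

lemma iso_edge_img:
  assumes "\<And>s. corners (gc s) = g ` corners s"
  shows "edgeX (gc ` X) p q \<Longrightarrow> p \<in> range g \<and> q \<in> range g"
  using assms unfolding edgeX_def by auto

lemma iso_W2:
  assumes inj: "inj g" and dist: "\<And>p q. \<bar>fst (g p) - fst (g q)\<bar> + \<bar>snd (g p) - snd (g q)\<bar> = \<bar>fst p - fst q\<bar> + \<bar>snd p - snd q\<bar>"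
    and cor: "\<And>s. corners (gc s) = g ` corners s"
  shows "W2 (gc ` X) (g v) = g ` W2 X v"
proof
  note E = iso_edge[OF inj dist cor]
  show "W2 (gc ` X) (g v) \<subseteq> g ` W2 X v"
  proof
    fix u assume "u \<in> W2 (gc ` X) (g v)"
    then obtain w where u: "u \<noteq> g v" "edgeX (gc ` X) (g v) w" "edgeX (gc ` X) w u" by (auto simp: W2_def)
    from iso_edge_img[OF cor u(3)] obtain w' u' where w': "w = g w'" "u = g u'" by auto
    have e1: "edgeX X v w'" using u(2) w' E by simp
    have e2: "edgeX X w' u'" using u(3) w' E by simp
    have "u' \<noteq> v" using u(1) w' by auto
    then have "u' \<in> W2 X v" using e1 e2 unfolding W2_def by blast
    then show "u \<in> g ` W2 X v" using w' by auto
  qed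
next
  note E = iso_edge[OF inj dist cor]
  show "g ` W2 X v \<subseteq> W2 (gc ` X) (g v)"
  proof
    fix u assume "u \<in> g ` W2 X v"
    then obtain u' where "u = g u'" "u' \<in> W2 X v" by auto
    then obtain w where "u' \<noteq> v" "edgeX X v w" "edgeX X w u'" by (auto simp: W2_def)
    then have "edgeX (gc ` X) (g v) (g w)" "edgeX (gc ` X) (g w) (g u')" "g u' \<noteq> g v"
      using E inj by (auto dest: injD)
    then show "u \<in> W2 (gc ` X) (g v)" unfolding \<open>u = g u'\<close> W2_def mem_Collect_eq by blast
  qed
qed

lemma iso_tau:
  assumes inj: "inj g" and dist: "\<And>p q. \<bar>fst (g p) - fst (g q)\<bar> + \<bar>snd (g p) - snd (g q)\<bar> = \<bar>fst p - fst q\<bar> + \<bar>snd p - snd q\<bar>"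
    and cor: "\<And>s. corners (gc s) = g ` corners s"
  shows "tauX (gc ` X) (g v) = tauX X v"
  unfolding tauX_def iso_W2[OF assms] using inj by (simp add: card_image inj_on_subset)

lemma iso_LD:
  assumes inj: "inj g" and dist: "\<And>p q. \<bar>fst (g p) - fst (g q)\<bar> + \<bar>snd (g p) - snd (g q)\<bar> = \<bar>fst p - fst q\<bar> + \<bar>snd p - snd q\<bar>"
    and cor: "\<And>s. corners (gc s) = g ` corners s"
  shows "LD (map gc L) = LD L"
proof -
  have DD: "Dset (map gc L) = g ` Dset L"
    unfolding Dset_def by (simp add: drop_map cor image_UN)
  show ?thesis
    unfolding LD_def DD
    by (subst sum.reindex) (auto simp: inj_on_subset[OF inj] map_butlast[symmetric] iso_tau[OF assms])
qed

lemma iso_ZC1: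
  assumes inj: "inj g" and dist: "\<And>p q. \<bar>fst (g p) - fst (g q)\<bar> + \<bar>snd (g p) - snd (g q)\<bar> = \<bar>fst p - fst q\<bar> + \<bar>snd p - snd q\<bar>"
    and cor: "\<And>s. corners (gc s) = g ` corners s"
  shows "ZC1 (map gc L) = ZC1 L"
proof -
  have VV: "vertsX (set (map gc L)) = g ` vertsX (set L)"
    unfolding vertsX_def by (simp add: cor image_UN)
  show ?thesis
    unfolding ZC1_eq VV
    by (subst sum.reindex) (auto simp: inj_on_subset[OF inj] iso_tau[OF assms])
qed

definition tr :: "int \<times> int \<Rightarrow> int \<times> int \<Rightarrow> int \<times> int" where
  "tr c p = (fst p + fst c, snd p + snd c)"
definition rot :: "int \<times> int \<Rightarrow> int \<times> int" where
  "rot p = (- snd p, fst p)"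
definition rotc :: "square \<Rightarrow> square" where
  "rotc s = (- snd s - 1, fst s)"

lemma tr_inj: "inj (tr c)" by (auto simp: inj_def tr_def prod_eq_iff)
lemma tr_dist: "\<bar>fst (tr c p) - fst (tr c q)\<bar> + \<bar>snd (tr c p) - snd (tr c q)\<bar> = \<bar>fst p - fst q\<bar> + \<bar>snd p - snd q\<bar>"
  by (simp add: tr_def)
lemma tr_cor: "corners (tr c s) = tr c ` corners s"
  by (simp add: corners_def tr_def algebra_simps)
lemma rot_inj: "inj rot" by (auto simp: inj_def rot_def prod_eq_iff)
lemma rot_dist: "\<bar>fst (rot p) - fst (rot q)\<bar> + \<bar>snd (rot p) - snd (rot q)\<bar> = \<bar>fst p - fst q\<bar> + \<bar>snd p - snd q\<bar>"
  by (simp add: rot_def abs_minus_commute)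
lemma rot_cor: "corners (rotc s) = rot ` corners s"
  by (auto simp: corners_def rot_def rotc_def algebra_simps)

lemmas LD_tr = iso_LD[OF tr_inj tr_dist tr_cor]
lemmas LD_rot = iso_LD[OF rot_inj rot_dist rot_cor]
lemmas ZC1_tr = iso_ZC1[OF tr_inj tr_dist tr_cor]
lemmas ZC1_rot = iso_ZC1[OF rot_inj rot_dist rot_cor]

lemma link_tr: "link (map (tr c) L) k = link L k" if "k < length L" "2 \<le> k"
  using that by (simp add: link_def tr_def)
lemma link_rot: "link (map rotc L) k = link L k" if "k < length L" "2 \<le> k"
  using that by (auto simp: link_def rotc_def)

lemma valid_tr: "is_polyomino_chain (map (tr c) L) \<longleftrightarrow> is_polyomino_chain L"
  by (simp add: is_polyomino_chain_def tr_def prod_eq_iff)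
lemma valid_rot: "is_polyomino_chain (map rotc L) \<longleftrightarrow> is_polyomino_chain L"
proof -
  have a: "\<bar>- b - 1 - (- b' - 1)\<bar> = \<bar>b - b'\<bar>" for b b' :: int by arith
  show ?thesis
    unfolding is_polyomino_chain_def by (simp add: rotc_def prod_eq_iff a max.commute add.commute conj_commute; simp add: abs_minus_commute)
qed


definition cornersL :: "square \<Rightarrow> (int\<times>int) list" where
 "cornersL s = [(fst s, snd s), (fst s + 1, snd s), (fst s, snd s + 1), (fst s + 1, snd s + 1)]"

lemma set_cornersL: "set (cornersL s) = corners s"
  by (simp add: cornersL_def corners_def)

definition tauE :: "square list \<Rightarrow> int \<times> int \<Rightarrow> nat" where
  "tauE L v = length (filter snd (candX (set L) v))"

lemma tauE_eq: "tauE L v = tauX (set L) v"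
  by (simp add: tauE_def tauX_cand)

definition LDexec :: "square list \<Rightarrow> int" where
 "LDexec L = sum_list (map (\<lambda>v. int (tauE L v)^2 - int (tauE (butlast L) v)^2)
     (remdups (concat (map cornersL (drop (length L - 3) L)))))"

lemma LD_exec: "LD L = LDexec L"
proof -
  have "Dset L = set (concat (map cornersL (drop (length L - 3) L)))"
    by (simp add: Dset_def set_cornersL)
  then show ?thesis
    unfolding LD_def LDexec_def tauE_eq by (simp only: sum.set_conv_list)
qed

definition ZC1exec :: "square list \<Rightarrow> nat" where
 "ZC1exec L = sum_list (map (\<lambda>v. (tauE L v)^2) (remdups (concat (map cornersL L))))"

lemma ZC1_exec: "ZC1 L = ZC1exec L"
proof -
  have "vertsX (set L) = set (concat (map cornersL L))"
    by (simp add: vertsX_def set_cornersL)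
  then show ?thesis
    unfolding ZC1_eq ZC1exec_def tauE_eq by (simp only: sum.set_conv_list)
qed

definition cheb :: "square \<Rightarrow> square \<Rightarrow> int" where
 "cheb s t = max \<bar>fst s - fst t\<bar> \<bar>snd s - snd t\<bar>"
definition okNew :: "square list \<Rightarrow> square \<Rightarrow> bool" where
 "okNew L q \<longleftrightarrow> q \<noteq> L!(length L - 2) \<and> list_all (\<lambda>s. 2 \<le> cheb s q) (take (length L - 2) L)"
definition dirs :: "(int\<times>int) list" where "dirs = [(1,0),(-1,0),(0,1),(0,-1)]"
definition ext :: "square list \<Rightarrow> square list list" where
 "ext L = filter (\<lambda>L'. okNew L (last L')) (map (\<lambda>d. L @ [(fst (last L) + fst d, snd (last L) + snd d)]) dirs)"
fun gen :: "nat \<Rightarrow> square list list" where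
 "gen 0 = []" | "gen (Suc 0) = []" | "gen (Suc (Suc 0)) = [[(0,0),(1,0)]]"
| "gen (Suc (Suc (Suc k))) = concat (map ext (gen (Suc (Suc k))))"

definition propsP :: "square list \<Rightarrow> int \<Rightarrow> bool" where
 "propsP L d = (let l = length L; lk = link L (l-1) in 32 \<le> d \<and> d \<le> 50 \<and> (lk = 1 \<longrightarrow> d \<le> 38) \<and> (lk = 2 \<longrightarrow> d \<ge> 44)
   \<and> ((\<forall>k\<in>set [2..<l]. link L k = 1) \<longrightarrow> d = 32)
   \<and> ((\<forall>k\<in>set [2..<l]. link L k = 2) \<longrightarrow> d = (if l = 4 then 46 else 50)) \<and> (l = 4 \<longrightarrow> d \<le> 46))"

definition props3 :: "square list \<Rightarrow> nat \<Rightarrow> bool" where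
 "props3 L z = (z = (if link L 2 = 1 then 52 else 62))"

lemma valid_take: "is_polyomino_chain L \<Longrightarrow> is_polyomino_chain (take k L)"
  unfolding is_polyomino_chain_def by auto

lemma valid_drop: assumes "is_polyomino_chain L" shows "is_polyomino_chain (drop k L)"
proof -
  note a = assms[unfolded is_polyomino_chain_def]
  show ?thesis unfolding is_polyomino_chain_def
  proof (intro conjI allI impI)
    fix i assume "Suc i < length (drop k L)"
    then show "\<bar>fst (drop k L ! i) - fst (drop k L ! Suc i)\<bar> + \<bar>snd (drop k L ! i) - snd (drop k L ! Suc i)\<bar> = 1"
      using a[THEN conjunct1, rule_format, of "k+i"] by simp
  next
    fix i j assume ij: "i + 2 = j \<and> j < length (drop k L)"
    then have "k + j < length L" by (simp add: less_diff_conv add.commute)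
    with ij show "drop k L ! i \<noteq> drop k L ! j"
      using a[THEN conjunct2, THEN conjunct1, rule_format, of "k+i" "k+j"] by simp
  next
    fix i j assume ij: "i + 3 \<le> j \<and> j < length (drop k L)"
    then have "k + j < length L" by (simp add: less_diff_conv add.commute)
    with ij show "2 \<le> max \<bar>fst (drop k L ! i) - fst (drop k L ! j)\<bar> \<bar>snd (drop k L ! i) - snd (drop k L ! j)\<bar>"
      using a[THEN conjunct2, THEN conjunct2, rule_format, of "k+i" "k+j"] by simp
  qed
qed

lemma unit_dirs: "\<bar>a\<bar> + \<bar>b\<bar> = (1::int) \<Longrightarrow> (a, b) \<in> set dirs"
proof -
  assume "\<bar>a\<bar> + \<bar>b\<bar> = (1::int)"
  then have "(a = 1 \<and> b = 0) \<or> (a = -1 \<and> b = 0) \<or> (a = 0 \<and> b = 1) \<or> (a = 0 \<and> b = -1)" by arith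
  then show ?thesis by (auto simp: dirs_def)
qed

lemma gen_complete:
  "is_polyomino_chain L \<Longrightarrow> length L = Suc (Suc k) \<Longrightarrow> L!0 = (0,0) \<Longrightarrow> L!1 = (1,0) \<Longrightarrow> L \<in> set (gen (Suc (Suc k)))"
proof (induction k arbitrary: L)
  case 0
  then have "L = [L!0, L!1]" by (simp add: list_eq_iff_nth_eq less_Suc_eq)
  then show ?case using 0 by simp
next
  case (Suc k)
  define B where "B = butlast L"
  define q where "q = last L"
  have LB: "L = B @ [q]" using Suc.prems(2) unfolding B_def q_def
    by (metis append_butlast_last_id list.size(3) nat.simps(3))
  have lenB: "length B = Suc (Suc k)" using Suc.prems(2) by (simp add: B_def)
  have vB: "is_polyomino_chain B" using valid_take[OF Suc.prems(1)] by (simp add: B_def butlast_conv_take)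
  have nB: "i < Suc (Suc k) \<Longrightarrow> B!i = L!i" for i using LB lenB by (simp add: nth_append)
  have nq: "L ! Suc (Suc k) = q" using LB lenB by (simp add: nth_append)
  have "B \<in> set (gen (Suc (Suc k)))" using Suc.IH[OF vB lenB] nB Suc.prems(3,4) by simp
  moreover have "L \<in> set (ext B)"
  proof -
    note a = Suc.prems(1)[unfolded is_polyomino_chain_def]
    have "B \<noteq> []" using lenB by auto
    then have lastB: "last B = L ! Suc k" using nB[of "Suc k"] lenB by (simp add: last_conv_nth)
    have "\<bar>fst (L ! Suc k) - fst q\<bar> + \<bar>snd (L ! Suc k) - snd q\<bar> = 1"
      using a[THEN conjunct1, rule_format, of "Suc k"] Suc.prems(2) nq by simp
    then have "\<bar>fst q - fst (last B)\<bar> + \<bar>snd q - snd (last B)\<bar> = 1" using lastB by (simp add: abs_minus_commute)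
    then have d: "(fst q - fst (last B), snd q - snd (last B)) \<in> set dirs" by (rule unit_dirs)
    have q1: "q \<noteq> B ! (length B - 2)"
      using a[THEN conjunct2, THEN conjunct1, rule_format, of k "Suc (Suc k)"] Suc.prems(2) nq nB lenB by simp
    have q2: "list_all (\<lambda>s. 2 \<le> cheb s q) (take (length B - 2) B)"
    proof (subst list_all_iff, intro ballI)
      fix s assume "s \<in> set (take (length B - 2) B)"
      then obtain i where i: "i < k" "s = B ! i" using lenB by (auto simp: in_set_conv_nth)
      then show "2 \<le> cheb s q"
        using a[THEN conjunct2, THEN conjunct2, rule_format, of i "Suc (Suc k)"] Suc.prems(2) nq nB[of i]
        by (simp add: cheb_def)
    qed
    define dv where "dv = (fst q - fst (last B), snd q - snd (last B))"
    have "L = B @ [(fst (last B) + fst dv, snd (last B) + snd dv)]"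
      using LB by (simp add: dv_def)
    moreover have "dv \<in> set dirs" using d by (simp add: dv_def)
    ultimately have "L \<in> set (map (\<lambda>d. B @ [(fst (last B) + fst d, snd (last B) + snd d)]) dirs)"
      by auto
    moreover have "okNew B (last L)" using q1 q2 LB by (simp add: okNew_def)
    ultimately show ?thesis unfolding ext_def by simp
  qed
  ultimately show ?case by auto
qed


definition propsE :: "square list \<Rightarrow> bool" where "propsE L = (let d = LDexec L in propsP L d)"
definition props3E :: "square list \<Rightarrow> bool" where "props3E L = (let d = ZC1exec L in props3 L d)"
lemma enum3: "\<forall>L\<in>set (gen 3). props3E L" by code_simp
lemma enum4: "\<forall>L\<in>set (gen 4). propsE L" by code_simp
lemma enum5: "\<forall>L\<in>set (gen 5). propsE L" by code_simp
lemma enum6: "\<forall>L\<in>set (gen 6). propsE L" by code_simp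
lemma enum7: "\<forall>L\<in>set (gen 7). propsE L" by code_simp


definition stepv :: "square list \<Rightarrow> int \<times> int" where
  "stepv L = (fst (L!1) - fst (L!0), snd (L!1) - snd (L!0))"

lemma norm_gen:
  assumes base: "\<And>L. is_polyomino_chain L \<Longrightarrow> length L = l \<Longrightarrow> L!0 = (0,0) \<Longrightarrow> L!1 = (1,0) \<Longrightarrow> P L"
    and inv_tr: "\<And>L c. P (map (tr c) L) \<Longrightarrow> P L"
    and inv_rot: "\<And>L. P (map rotc L) \<Longrightarrow> P L"
    and v: "is_polyomino_chain L" and len: "length L = l" and l2: "2 \<le> l"
  shows "P L"
proof -
  have A: "P L" if "is_polyomino_chain L" "length L = l" "stepv L = (1,0)" for L
  proof -
    define c where "c = (- fst (L!0), - snd (L!0))"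
    have "is_polyomino_chain (map (tr c) L)" using that valid_tr by simp
    moreover have "length (map (tr c) L) = l" using that by simp
    moreover have "map (tr c) L ! 0 = (0,0)" using that l2 by (simp add: tr_def c_def)
    moreover have "map (tr c) L ! 1 = (1,0)" using that l2 by (simp add: tr_def c_def stepv_def prod_eq_iff)
    ultimately have "P (map (tr c) L)" by (rule base)
    then show ?thesis by (rule inv_tr)
  qed
  have R: "P L" if IH: "\<And>L. is_polyomino_chain L \<Longrightarrow> length L = l \<Longrightarrow> stepv L = (- snd d, fst d) \<Longrightarrow> P L"
    and "is_polyomino_chain L" "length L = l" "stepv L = d" for L d
  proof -
    have "is_polyomino_chain (map rotc L)" using that valid_rot by simp
    moreover have "length (map rotc L) = l" using that by simp
    moreover have "stepv (map rotc L) = (- snd d, fst d)" using that l2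
      by (auto simp: stepv_def rotc_def)
    ultimately have "P (map rotc L)" by (rule IH)
    then show ?thesis by (rule inv_rot)
  qed
  have d: "stepv L \<in> set dirs"
    unfolding stepv_def
    using v[unfolded is_polyomino_chain_def, THEN conjunct1, rule_format, of 0] len l2
    by (intro unit_dirs) (simp add: abs_minus_commute)
  have A1: "P L" if "is_polyomino_chain L" "length L = l" "stepv L = (0,-1)" for L
    using R[of "(0,-1)"] A that by simp
  have A2: "P L" if "is_polyomino_chain L" "length L = l" "stepv L = (-1,0)" for L
    using R[of "(-1,0)"] A1 that by simp
  have A3: "P L" if "is_polyomino_chain L" "length L = l" "stepv L = (0,1)" for L
    using R[of "(0,1)"] A2 that by simp
  show ?thesis using d A A1 A2 A3 v len by (auto simp: dirs_def)
qed

lemma propsP_map: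
  assumes "\<And>k. 2 \<le> k \<Longrightarrow> k < length L \<Longrightarrow> link (map f L) k = link L k" "3 \<le> length L"
  shows "propsP (map f L) d = propsP L d"
proof -
  have "link (map f L) (length L - 1) = link L (length L - 1)" using assms by simp
  moreover have "(\<forall>k\<in>set [2..<length L]. link (map f L) k = v) = (\<forall>k\<in>set [2..<length L]. link L k = v)" for v
    using assms by auto
  ultimately show ?thesis unfolding propsP_def Let_def by simp
qed

lemma props_fixed:
  assumes "is_polyomino_chain L" "length L = Suc (Suc k)" "L!0 = (0,0)" "L!1 = (1,0)" "2 \<le> k" "k \<le> 5"
  shows "propsP L (LD L)"
proof -
  have g: "L \<in> set (gen (Suc (Suc k)))" using gen_complete assms by blast
  have "Suc (Suc k) = 4 \<or> Suc (Suc k) = 5 \<or> Suc (Suc k) = 6 \<or> Suc (Suc k) = 7" using assms by auto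
  then have "propsE L"
  proof (elim disjE)
    assume "Suc (Suc k) = 4" then show "propsE L" using g enum4 by metis
  next
    assume "Suc (Suc k) = 5" then show "propsE L" using g enum5 by metis
  next
    assume "Suc (Suc k) = 6" then show "propsE L" using g enum6 by metis
  next
    assume "Suc (Suc k) = 7" then show "propsE L" using g enum7 by metis
  qed
  then show ?thesis by (simp add: propsE_def LD_exec)
qed

lemma props_all:
  assumes "is_polyomino_chain L" "4 \<le> length L" "length L \<le> 7"
  shows "propsP L (LD L)"
proof -
  define k where "k = length L - 2"
  have k: "length L = Suc (Suc k)" "2 \<le> k" "k \<le> 5" using assms by (auto simp: k_def)
  show ?thesis
  proof (rule norm_gen[where P = "\<lambda>L. propsP L (LD L)" and l = "Suc (Suc k)"])
    show "propsP L (LD L)" if "is_polyomino_chain L" "length L = Suc (Suc k)" "L!0 = (0,0)" "L!1 = (1,0)" for L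
      using props_fixed that k by blast
    show "propsP L (LD L)" if "propsP (map (tr c) L) (LD (map (tr c) L))" for L c
    proof (cases "3 \<le> length L")
      case True
      then show ?thesis using that propsP_map[of L "tr c"] link_tr LD_tr by simp
    next
      case False
      then show ?thesis using that by (simp add: propsP_def Let_def LD_tr)
    qed
    show "propsP L (LD L)" if "propsP (map rotc L) (LD (map rotc L))" for L
    proof (cases "3 \<le> length L")
      case True
      then show ?thesis using that propsP_map[of L rotc] link_rot LD_rot by simp
    next
      case False
      then show ?thesis using that by (simp add: propsP_def Let_def LD_rot)
    qed
  qed (use assms k in auto)
qed

lemma base3:
  assumes "is_polyomino_chain L" "length L = 3"
  shows "ZC1 L = (if link L 2 = 1 then 52 else 62)"
proof -
  have "length L = 3 \<longrightarrow> props3 L (ZC1 L)"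
  proof (rule norm_gen[where P = "\<lambda>L. length L = 3 \<longrightarrow> props3 L (ZC1 L)" and l = 3])
    show "length L = 3 \<longrightarrow> props3 L (ZC1 L)" if "is_polyomino_chain L" "length L = 3" "L!0 = (0,0)" "L!1 = (1,0)" for L
    proof -
      have "L \<in> set (gen (Suc (Suc (Suc 0))))" using gen_complete[of L 1] that by (simp add: numeral_eq_Suc)
      moreover have "Suc (Suc (Suc 0)) = 3" by simp
      ultimately have "props3E L" using enum3 by metis
      then show ?thesis by (simp add: props3E_def ZC1_exec)
    qed
    show "length L = 3 \<longrightarrow> props3 L (ZC1 L)" if "length (map (tr c) L) = 3 \<longrightarrow> props3 (map (tr c) L) (ZC1 (map (tr c) L))" for L c
      using that link_tr[of 2 L c] ZC1_tr by (simp add: props3_def)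
    show "length L = 3 \<longrightarrow> props3 L (ZC1 L)" if "length (map rotc L) = 3 \<longrightarrow> props3 (map rotc L) (ZC1 (map rotc L))" for L
      using that link_rot[of 2 L] ZC1_rot by (simp add: props3_def)
  qed (use assms in auto)
  then show ?thesis using assms by (simp add: props3_def)
qed


lemma link_vals: "link S k = 1 \<or> link S k = 2" by (simp add: link_def)

lemma link_drop: assumes "2 \<le> j" "j < length (drop a xs)" shows "link (drop a xs) j = link xs (a + j)"
proof -
  have al: "a \<le> length xs" using assms by simp
  have e1: "drop a xs ! j = xs ! (a + j)" using al by simp
  have x2: "a + (j - 1) = a + j - 1" "a + (j - 2) = a + j - 2" using assms(1) by arith+
  have e2: "drop a xs ! (j - 1) = xs ! (a + j - 1)" using al nth_drop[OF al, of "j-1"] x2 by simp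
  have e3: "drop a xs ! (j - 2) = xs ! (a + j - 2)" using al nth_drop[OF al, of "j-2"] x2 by simp
  show ?thesis unfolding link_def e1 e2 e3 ..
qed

lemma link_app: assumes "k < length S" shows "link (S @ [q]) k = link S k"
proof -
  have "k - 1 < length S" "k - 2 < length S" using assms by arith+
  then have "(S @ [q]) ! k = S ! k" "(S @ [q]) ! (k - 1) = S ! (k - 1)" "(S @ [q]) ! (k - 2) = S ! (k - 2)"
    using assms by (simp_all add: nth_append)
  then show ?thesis unfolding link_def by simp
qed

definition Mx :: "nat \<Rightarrow> int" where "Mx n = (if n = 3 then 62 else 50 * int n - 92)"

lemma main:
  assumes "n \<ge> 3" "is_polyomino_chain S" "length S = n"
  shows "32 * int n - 44 \<le> int (ZC1 S) \<and> (int (ZC1 S) = 32 * int n - 44 \<longleftrightarrow> (\<forall>k. 2 \<le> k \<and> k < n \<longrightarrow> link S k = 1))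
     \<and> int (ZC1 S) \<le> Mx n \<and> (int (ZC1 S) = Mx n \<longleftrightarrow> (\<forall>k. 2 \<le> k \<and> k < n \<longrightarrow> link S k = 2))"
  using assms
proof (induction n arbitrary: S rule: nat_induct_at_least)
  case base
  have b: "ZC1 S = (if link S 2 = 1 then 52 else 62)" using base3 base by simp
  have k2: "(\<forall>k. 2 \<le> k \<and> k < 3 \<longrightarrow> link S k = v) \<longleftrightarrow> link S 2 = v" for v
    by (auto simp: le_less_Suc_eq numeral_eq_Suc)
  show ?case unfolding k2 Mx_def using b link_vals[of S 2] by auto
next
  case (Suc n S')
  define S where "S = butlast S'"
  define q where "q = last S'"
  have SS: "S' = S @ [q]" using Suc.prems(2) Suc.hyps unfolding S_def q_def
    by (metis append_butlast_last_id list.size(3) nat.simps(3))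
  have lenS: "length S = n" using Suc.prems(2) by (simp add: S_def)
  have vS: "is_polyomino_chain S" using valid_take[OF Suc.prems(1)] by (simp add: S_def butlast_conv_take)
  note IH = Suc.IH[OF vS lenS]
  define L where "L = drop (n - 6) S'"
  define d where "d = LD L"
  have Z: "int (ZC1 S') = int (ZC1 S) + d"
    using step[of S q n] Suc.prems(1) SS lenS Suc.hyps by (simp add: d_def L_def)
  have lenL: "length L = Suc n - (n - 6)" using Suc.prems(2) by (simp add: L_def)
  have lenL4: "4 \<le> length L" "length L \<le> 7" using lenL Suc.hyps by auto
  have vL: "is_polyomino_chain L" using valid_drop[OF Suc.prems(1)] by (simp add: L_def)
  have P: "propsP L d" using props_all[OF vL lenL4] by (simp add: d_def)
  have linkL: "link L j = link S' (n - 6 + j)" if "2 \<le> j" "j < length L" for j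
    using link_drop[of j "n-6" S'] that by (simp add: L_def)
  have lk: "link L (length L - 1) = link S' n"
    using linkL[of "length L - 1"] lenL4 lenL by (simp add: le_diff_conv)
  have linkS: "link S' k = link S k" if "k < n" for k using link_app[of k S q] that SS lenS by simp
  have allS': "(\<forall>k. 2 \<le> k \<and> k < Suc n \<longrightarrow> link S' k = v) \<longleftrightarrow>
       (\<forall>k. 2 \<le> k \<and> k < n \<longrightarrow> link S k = v) \<and> link S' n = v" for v
    using linkS Suc.hyps by (auto simp: less_Suc_eq)
  have allL: "(\<forall>k\<in>set [2..<length L]. link L k = v)" if "\<forall>k. 2 \<le> k \<and> k < Suc n \<longrightarrow> link S' k = v" for v
  proof
    fix j assume "j \<in> set [2..<length L]"
    then have j: "2 \<le> j" "j < length L" by auto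
    then have "n - 6 + j < Suc n" using lenL by auto
    then show "link L j = v" using linkL[OF j] that j by auto
  qed
  note PP = P[unfolded propsP_def Let_def lk]
  have lv: "link S' n = 1 \<or> link S' n = 2" by (rule link_vals)
  have d32: "32 \<le> d" and d50: "d \<le> 50" and d38: "link S' n = 1 \<Longrightarrow> d \<le> 38"
    and d44: "link S' n = 2 \<Longrightarrow> 44 \<le> d" using PP by auto
  have L4: "length L = 4 \<longleftrightarrow> n = 3" using lenL Suc.hyps by auto
  have d46: "n = 3 \<Longrightarrow> d \<le> 46" using PP L4 by auto
  have dall1: "d = 32" if "\<forall>k. 2 \<le> k \<and> k < Suc n \<longrightarrow> link S' k = 1"
    using PP allL[OF that] by auto
  have dall2: "d = (if n = 3 then 46 else 50)" if "\<forall>k. 2 \<le> k \<and> k < Suc n \<longrightarrow> link S' k = 2"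
    using PP allL[OF that] L4 by auto
  have MxS: "Mx (Suc n) = 50 * int n - 42" using Suc.hyps by (simp add: Mx_def)
  have Mx3: "n = 3 \<Longrightarrow> Mx n = 62" and Mx4: "n \<noteq> 3 \<Longrightarrow> Mx n = 50 * int n - 92" by (simp_all add: Mx_def)
  have I1: "32 * int n - 44 \<le> int (ZC1 S)" and I2: "int (ZC1 S) \<le> Mx n"
    and I3: "int (ZC1 S) = 32 * int n - 44 \<longleftrightarrow> (\<forall>k. 2 \<le> k \<and> k < n \<longrightarrow> link S k = 1)"
    and I4: "int (ZC1 S) = Mx n \<longleftrightarrow> (\<forall>k. 2 \<le> k \<and> k < n \<longrightarrow> link S k = 2)" using IH by auto
  have max1: "int (ZC1 S') \<le> Mx (Suc n)"
  proof (cases "n = 3")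
    case True then show ?thesis using Z MxS Mx3 I2 d46 by simp
  next
    case False then show ?thesis using Z MxS Mx4 I2 d50 by simp
  qed
  show ?case
  proof (intro conjI)
    show "32 * int (Suc n) - 44 \<le> int (ZC1 S')" using I1 d32 Z by simp
    show "int (ZC1 S') = 32 * int (Suc n) - 44 \<longleftrightarrow> (\<forall>k. 2 \<le> k \<and> k < Suc n \<longrightarrow> link S' k = 1)"
    proof
      assume h: "int (ZC1 S') = 32 * int (Suc n) - 44"
      then have e: "int (ZC1 S) = 32 * int n - 44" "d = 32" using I1 d32 Z by simp_all
      then have "link S' n = 1" using lv d44 by auto
      then show "\<forall>k. 2 \<le> k \<and> k < Suc n \<longrightarrow> link S' k = 1" using e I3 allS' by simp
    next
      assume h: "\<forall>k. 2 \<le> k \<and> k < Suc n \<longrightarrow> link S' k = 1"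
      then have "d = 32" by (rule dall1)
      moreover have "int (ZC1 S) = 32 * int n - 44" using I3 h allS' by simp
      ultimately show "int (ZC1 S') = 32 * int (Suc n) - 44" using Z by simp
    qed
    show "int (ZC1 S') \<le> Mx (Suc n)" by (rule max1)
    show "int (ZC1 S') = Mx (Suc n) \<longleftrightarrow> (\<forall>k. 2 \<le> k \<and> k < Suc n \<longrightarrow> link S' k = 2)"
    proof
      assume h: "int (ZC1 S') = Mx (Suc n)"
      have e: "int (ZC1 S) = Mx n \<and> link S' n = 2"
      proof (cases "n = 3")
        case True
        then have "int (ZC1 S) = Mx n" "d = 46" using h Z MxS Mx3 I2 d46 by simp_all
        then show ?thesis using lv d38 by auto
      next
        case False
        then have "int (ZC1 S) = Mx n" "d = 50" using h Z MxS Mx4 I2 d50 by simp_all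
        then show ?thesis using lv d38 by auto
      qed
      then show "\<forall>k. 2 \<le> k \<and> k < Suc n \<longrightarrow> link S' k = 2" using I4 allS' by simp
    next
      assume h: "\<forall>k. 2 \<le> k \<and> k < Suc n \<longrightarrow> link S' k = 2"
      then have dd: "d = (if n = 3 then 46 else 50)" by (rule dall2)
      have "int (ZC1 S) = Mx n" using I4 h allS' by simp
      then show "int (ZC1 S') = Mx (Suc n)" using Z dd MxS Mx3 Mx4 by (cases "n = 3") simp_all
    qed
  qed
qed


lemma Li_len: "length (Li n) = n" by (simp add: Li_def)
lemma Li_nth: "i < n \<Longrightarrow> Li n ! i = (int i, 0)" by (simp add: Li_def)

lemma Li_valid: "is_polyomino_chain (Li n)"
  unfolding is_polyomino_chain_def Li_len by (auto simp: Li_nth)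

lemma Li_link: "2 \<le> k \<Longrightarrow> k < n \<Longrightarrow> link (Li n) k = 1"
  by (simp add: link_def Li_nth of_nat_diff)

lemma Zz_len: "length (Zz n) = n" by (simp add: Zz_def)
lemma Zz_nth: "i < n \<Longrightarrow> Zz n ! i = (int ((i + 1) div 2), int (i div 2))" by (simp add: Zz_def)

lemma FG: "(i + 1) div 2 + i div 2 = (i::nat)" by presburger

lemma Zz_valid: "is_polyomino_chain (Zz n)"
  unfolding is_polyomino_chain_def Zz_len
proof (intro conjI allI impI)
  fix i assume i: "Suc i < n"
  have "(i mod 2 = 0 \<and> (i + 2) div 2 = (i + 1) div 2 + 1 \<and> (i + 1) div 2 = i div 2) \<or>
        (i mod 2 = 1 \<and> (i + 2) div 2 = (i + 1) div 2 \<and> (i + 1) div 2 = i div 2 + 1)" by presburger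
  then show "\<bar>fst (Zz n ! i) - fst (Zz n ! Suc i)\<bar> + \<bar>snd (Zz n ! i) - snd (Zz n ! Suc i)\<bar> = 1"
    using i by (auto simp: Zz_nth)
next
  fix i j assume ij: "i + 2 = j \<and> j < n"
  have "(j + 1) div 2 = (i + 1) div 2 + 1" using ij by presburger
  then show "Zz n ! i \<noteq> Zz n ! j" using ij by (simp add: Zz_nth)
next
  fix i j assume ij: "i + 3 \<le> j \<and> j < n"
  have m1: "(i + 1) div 2 \<le> (j + 1) div 2" "i div 2 \<le> j div 2" using ij by (simp_all add: div_le_mono)
  have s: "(j + 1) div 2 + j div 2 = j" "(i + 1) div 2 + i div 2 = i" by (rule FG)+
  define a where "a = int ((j + 1) div 2) - int ((i + 1) div 2)"
  define b where "b = int (j div 2) - int (i div 2)"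
  have "a \<ge> 0" "b \<ge> 0" "a + b \<ge> 3" using m1 s ij unfolding a_def b_def by linarith+
  then have "2 \<le> max \<bar>a\<bar> \<bar>b\<bar>" by (simp add: max_def)
  then show "2 \<le> max \<bar>fst (Zz n ! i) - fst (Zz n ! j)\<bar> \<bar>snd (Zz n ! i) - snd (Zz n ! j)\<bar>"
    using ij by (simp add: Zz_nth a_def b_def abs_minus_commute)
qed

lemma Zz_link: assumes "2 \<le> k" "k < n" shows "link (Zz n) k = 2"
proof -
  have "\<exists>t. k = 2 * t + 2 \<or> k = 2 * t + 3" using assms(1) by presburger
  then obtain t where "k = 2 * t + 2 \<or> k = 2 * t + 3" by blast
  have dv: "(2 * t + 1) div 2 = t" "(2 * t + 2) div 2 = t + 1" "(2 * t + 3) div 2 = t + 1"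
     "(2 * t) div 2 = t" "(2 * t + 4) div 2 = t + 2" "(2 * t + 2 + 1) div 2 = t + 1" "(2 * t + 3 + 1) div 2 = t + 2" by presburger+
  from \<open>k = 2 * t + 2 \<or> k = 2 * t + 3\<close> show ?thesis
  proof
    assume k: "k = 2 * t + 2"
    have "Zz n ! k = (int t + 1, int t + 1)" "Zz n ! (k - 1) = (int t + 1, int t)" "Zz n ! (k - 2) = (int t, int t)"
      using assms k dv by (simp_all add: Zz_nth)
    then show ?thesis by (simp add: link_def)
  next
    assume k: "k = 2 * t + 3"
    have "Zz n ! k = (int t + 2, int t + 1)" "Zz n ! (k - 1) = (int t + 1, int t + 1)" "Zz n ! (k - 2) = (int t + 1, int t)"
      using assms k dv by (simp_all add: Zz_nth)
    then show ?thesis by (simp add: link_def)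
  qed
qed

theorem proposition1:
  fixes n :: nat and S :: "square list"
  assumes "n \<ge> 3" and "is_polyomino_chain S" and "length S = n"
  shows "ZC1 (Li n) \<le> ZC1 S \<and> ZC1 S \<le> ZC1 (Zz n)
    \<and> (ZC1 S = ZC1 (Li n) \<longleftrightarrow> (\<forall>k. 2 \<le> k \<and> k < n \<longrightarrow> link S k = 1))
    \<and> (ZC1 S = ZC1 (Zz n) \<longleftrightarrow> (\<forall>k. 2 \<le> k \<and> k < n \<longrightarrow> link S k = 2))
    \<and> ZC1 (Li n) = 32 * n - 44
    \<and> (n \<ge> 4 \<longrightarrow> ZC1 (Zz n) = 50 * n - 92)"
proof -
  note mS = main[OF assms]
  note mL = main[OF assms(1) Li_valid Li_len]
  note mZ = main[OF assms(1) Zz_valid Zz_len]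
  have L: "int (ZC1 (Li n)) = 32 * int n - 44" using mL Li_link by auto
  have Zv: "int (ZC1 (Zz n)) = Mx n" using mZ Zz_link by auto
  have "int (32 * n - 44) = 32 * int n - 44" using assms(1) by (simp add: of_nat_diff)
  then have L': "ZC1 (Li n) = 32 * n - 44" using L by linarith
  have Z': "n \<ge> 4 \<longrightarrow> ZC1 (Zz n) = 50 * n - 92"
  proof
    assume n4: "4 \<le> n"
    then have "int (ZC1 (Zz n)) = 50 * int n - 92" using Zv by (simp add: Mx_def)
    moreover have "int (50 * n - 92) = 50 * int n - 92" using n4 by (simp add: of_nat_diff)
    ultimately show "ZC1 (Zz n) = 50 * n - 92" by linarith
  qed
  have a: "ZC1 (Li n) \<le> ZC1 S" using L mS by linarith
  have b: "ZC1 S \<le> ZC1 (Zz n)" using Zv mS by linarith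
  have c: "ZC1 S = ZC1 (Li n) \<longleftrightarrow> (\<forall>k. 2 \<le> k \<and> k < n \<longrightarrow> link S k = 1)"
    using L mS by (metis of_nat_eq_iff)
  have d: "ZC1 S = ZC1 (Zz n) \<longleftrightarrow> (\<forall>k. 2 \<le> k \<and> k < n \<longrightarrow> link S k = 2)"
    using Zv mS by (metis of_nat_eq_iff)
  show ?thesis using a b c d L' Z' by blast
qed


end
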